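(* (1) The topological space $({\rm elh}(\mathbb{C}),\tau_{CC})$ is path connected. (2) For every fixed $f\in{\rm elh}(\mathbb{C})$, the set $R_f({\rm elh}(\mathbb{C}))=\{g\circ f\,:\,g\in{\rm elh}(\mathbb{C})\}$ is a closed subset of $({\rm elh}(\mathbb{C}),\tau_{CC})$.
   Context: ${\rm elh}(\mathbb{C})$ denotes the set of entire functions with nowhere vanishing derivative and derivative $1$ at $0$. $\tau_{CC}$ is the topology of uniform convergence on compact subsets of $\mathbb{C}$. *)

theory Defs
  imports "HOL-Complex_Analysis.Complex_Analysis"
begin

definition elh :: "(complex \<Rightarrow> complex) set" where
  "elh = {f. f holomorphic_on UNIV \<and> (\<forall>z. deriv f z \<noteq> 0) \<and> deriv f 0 = 1}"

definition tau_CC :: "(complex \<Rightarrow> complex) topology" where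
  "tau_CC = topology (\<lambda>U. \<forall>f\<in>U. \<exists>K e. compact K \<and> e > 0 \<and>
      {g. \<forall>z\<in>K. dist (g z) (f z) < e} \<subseteq> U)"

definition R_elh :: "(complex \<Rightarrow> complex) \<Rightarrow> (complex \<Rightarrow> complex) set" where
  "R_elh f = {g \<circ> f | g. g \<in> elh}"

end

theory Submission
  imports Defs
begin


definition PCC :: "(complex\<Rightarrow>complex) set \<Rightarrow> bool" where
  "PCC U \<longleftrightarrow> (\<forall>f\<in>U. \<exists>K e. compact K \<and> e > 0 \<and> {g. \<forall>z\<in>K. dist (g z) (f z) < e} \<subseteq> U)"

lemma PCC_Int:
  assumes S: "PCC S" and T: "PCC T" shows "PCC (S \<inter> T)"
  unfolding PCC_def
proof
  fix f assume f: "f \<in> S \<inter> T"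
  obtain K1 e1 where 1: "compact K1" "e1 > 0" "{g. \<forall>z\<in>K1. dist (g z) (f z) < e1} \<subseteq> S"
    using S f unfolding PCC_def by (meson IntD1)
  obtain K2 e2 where 2: "compact K2" "e2 > 0" "{g. \<forall>z\<in>K2. dist (g z) (f z) < e2} \<subseteq> T"
    using T f unfolding PCC_def by (meson IntD2)
  have "{g. \<forall>z\<in>K1 \<union> K2. dist (g z) (f z) < min e1 e2} \<subseteq> S \<inter> T"
  proof
    fix g assume "g \<in> {g. \<forall>z\<in>K1 \<union> K2. dist (g z) (f z) < min e1 e2}"
    then have "g \<in> {g. \<forall>z\<in>K1. dist (g z) (f z) < e1}" "g \<in> {g. \<forall>z\<in>K2. dist (g z) (f z) < e2}"
      by auto
    then show "g \<in> S \<inter> T" using 1(3) 2(3) by blast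
  qed
  moreover have "compact (K1 \<union> K2)" using 1(1) 2(1) by (rule compact_Un)
  moreover have "min e1 e2 > 0" using 1 2 by simp
  ultimately show "\<exists>K e. compact K \<and> e > 0 \<and> {g. \<forall>z\<in>K. dist (g z) (f z) < e} \<subseteq> S \<inter> T"
    by blast
qed

lemma PCC_Union:
  assumes "\<And>S. S \<in> KK \<Longrightarrow> PCC S" shows "PCC (\<Union>KK)"
  unfolding PCC_def
proof
  fix f assume "f \<in> \<Union>KK"
  then obtain S where S: "S \<in> KK" "f \<in> S" by blast
  have "PCC S" using assms S(1) by blast
  then obtain K e where "compact K" "e > 0" "{g. \<forall>z\<in>K. dist (g z) (f z) < e} \<subseteq> S"
    using S(2) unfolding PCC_def by meson
  then show "\<exists>K e. compact K \<and> e > 0 \<and> {g. \<forall>z\<in>K. dist (g z) (f z) < e} \<subseteq> \<Union>KK"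
    using S(1) by blast
qed

lemma istop_CC: "istopology PCC"
  unfolding istopology_def using PCC_Int PCC_Union by blast

lemma tau_CC_eq: "tau_CC = topology PCC"
  unfolding tau_CC_def PCC_def by simp

lemma openin_CC: "openin tau_CC U \<longleftrightarrow> (\<forall>f\<in>U. \<exists>K e. compact K \<and> e > 0 \<and>
      {g. \<forall>z\<in>K. dist (g z) (f z) < e} \<subseteq> U)"
  unfolding tau_CC_eq topology_inverse'[OF istop_CC] PCC_def by (rule refl)

lemma topspace_CC: "topspace tau_CC = UNIV"
proof -
  have "openin tau_CC UNIV" unfolding openin_CC by (auto intro!: exI[of _ "{}"] exI[of _ "1::real"])
  then show ?thesis using openin_subset by blast
qed

lemma path_CC:
  assumes "continuous_on ({0..1} \<times> UNIV) (\<lambda>(t,z). H t z)"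
  shows "continuous_map (top_of_set {0..1::real}) tau_CC H"
  unfolding continuous_map_def topspace_CC
proof (rule conjI)
  show "H \<in> topspace (top_of_set {0..1}) \<rightarrow> UNIV" by simp
  show "\<forall>U. openin tau_CC U \<longrightarrow> openin (top_of_set {0..1}) {x \<in> topspace (top_of_set {0..1}). H x \<in> U}"
  proof (rule allI, rule impI)
  fix U assume U: "openin tau_CC U"
  show "openin (top_of_set {0..1}) {x \<in> topspace (top_of_set {0..1}). H x \<in> U}"
    unfolding openin_euclidean_subtopology_iff
  proof (intro conjI ballI)
    show "{x \<in> topspace (top_of_set {0..1}). H x \<in> U} \<subseteq> {0..1}" by auto
    fix t0 assume t0: "t0 \<in> {x \<in> topspace (top_of_set {0..1::real}). H x \<in> U}"
    then obtain K e where K: "compact K" "e > 0" "{g. \<forall>z\<in>K. dist (g z) (H t0 z) < e} \<subseteq> U"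
      using U unfolding openin_CC by auto
    have sub: "{0..1} \<times> K \<subseteq> {0..1::real} \<times> UNIV" by auto
    have "uniformly_continuous_on ({0..1} \<times> K) (\<lambda>(t,z). H t z)"
      by (rule compact_uniformly_continuous[OF continuous_on_subset[OF assms sub] compact_Times[OF compact_Icc K(1)]])
    then obtain d where d: "d > 0" "\<forall>x\<in>{0..1} \<times> K. \<forall>x'\<in>{0..1} \<times> K.
        dist x' x < d \<longrightarrow> dist ((\<lambda>(t,z). H t z) x') ((\<lambda>(t,z). H t z) x) < e"
      unfolding uniformly_continuous_on_def using K(2) by blast
    show "\<exists>e>0. \<forall>x'\<in>{0..1}. dist x' t0 < e \<longrightarrow> x' \<in> {x \<in> topspace (top_of_set {0..1}). H x \<in> U}"
    proof -
    have "\<forall>x'\<in>{0..1}. dist x' t0 < d \<longrightarrow> x' \<in> {x \<in> topspace (top_of_set {0..1}). H x \<in> U}"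
    proof (rule ballI, rule impI)
      fix t assume t: "t \<in> {0..1::real}" "dist t t0 < d"
      have "\<forall>z\<in>K. dist (H t z) (H t0 z) < e"
      proof
        fix z assume z: "z \<in> K"
        have dd: "dist (t, z) (t0, z) < d" using t(2) by (simp add: dist_Pair_Pair)
        have m1: "(t0, z) \<in> {0..1} \<times> K" using t0 z by simp
        have m2: "(t, z) \<in> {0..1} \<times> K" using t z by simp
        have "dist ((\<lambda>(t,z). H t z) (t, z)) ((\<lambda>(t,z). H t z) (t0, z)) < e"
          using d(2) m1 m2 dd by blast
        then show "dist (H t z) (H t0 z) < e" by simp
      qed
      then have "H t \<in> U" using K(3) by blast
      then show "t \<in> {x \<in> topspace (top_of_set {0..1}). H x \<in> U}" using t by simp
    qed
    then show ?thesis using d(1) by blast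
    qed
  qed
  qed
qed

lemma elh_D:
  assumes "f \<in> elh"
  shows "f holomorphic_on UNIV" "\<And>z. deriv f z \<noteq> 0" "deriv f 0 = 1"
    "\<And>z. (f has_field_derivative deriv f z) (at z)"
proof -
  show h: "f holomorphic_on UNIV" using assms unfolding elh_def by blast
  show "\<And>z. deriv f z \<noteq> 0" "deriv f 0 = 1" using assms unfolding elh_def by blast+
  show "\<And>z. (f has_field_derivative deriv f z) (at z)"
    by (rule holomorphic_derivI[OF h open_UNIV UNIV_I])
qed

lemma path_to_id:
  assumes f: "f \<in> elh"
  shows "path_component_of (subtopology tau_CC elh) (\<lambda>z. z) f"
proof -
  define Q where "Q = (\<lambda>w. if w = 0 then deriv f 0 else (f w - f 0) / (w - 0))"
  have Qh: "Q holomorphic_on UNIV" unfolding Q_def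
    by (rule pole_lemma) (use elh_D[OF f] in auto)
  then have Qc: "continuous_on UNIV Q" by (simp add: holomorphic_on_imp_continuous_on)
  define H where "H = (\<lambda>(t::real) z. z * Q (of_real t * z) + of_real t * f 0)"
  have Hc: "continuous_on ({0..1} \<times> UNIV) (\<lambda>(t,z). H t z)"
    unfolding H_def case_prod_unfold
    by (intro continuous_intros continuous_on_compose2[OF Qc]) auto
  have H0: "H 0 = (\<lambda>z. z)" using elh_D[OF f] by (auto simp: H_def Q_def)
  have Ht: "H t = (\<lambda>z. (f (of_real t * z) - f 0) / of_real t + of_real t * f 0)" if "t \<noteq> 0" for t
  proof
    fix z show "H t z = (f (of_real t * z) - f 0) / of_real t + of_real t * f 0"
      using that by (cases "z = 0") (auto simp: H_def Q_def field_simps)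
  qed
  have H1: "H 1 = f" using Ht[of 1] by auto
  have Hel: "H t \<in> elh" if "t \<in> {0..1}" for t
  proof (cases "t = 0")
    case True then show ?thesis by (simp add: H0 elh_def)
  next
    case False
    have d: "(H t has_field_derivative deriv f (of_real t * z)) (at z)" for z
    proof -
      have "((\<lambda>z. (f (of_real t * z) - f 0) / of_real t + of_real t * f 0) has_field_derivative
         (deriv f (of_real t * z) * of_real t) / of_real t + 0) (at z)"
      proof -
        have "((\<lambda>z. of_real t * z) has_field_derivative of_real t) (at z)"
          using DERIV_cmult_Id by blast
        then have 1: "((\<lambda>z. f (of_real t * z)) has_field_derivative deriv f (of_real t * z) * of_real t) (at z)"
          by (rule DERIV_chain2[OF elh_D(4)[OF f]])
        have 2: "((\<lambda>z. f (of_real t * z) - f 0) has_field_derivative deriv f (of_real t * z) * of_real t - 0) (at z)"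
          by (rule DERIV_diff[OF 1 DERIV_const])
        have 3: "((\<lambda>z. (f (of_real t * z) - f 0) / of_real t) has_field_derivative (deriv f (of_real t * z) * of_real t - 0) / of_real t) (at z)"
          by (rule DERIV_cdivide[OF 2])
        show ?thesis using DERIV_add[OF 3 DERIV_const] by simp
      qed
      moreover have "(deriv f (of_real t * z) * of_real t) / of_real t + 0 = deriv f (of_real t * z)"
        using False by simp
      ultimately show ?thesis using Ht[OF False] by metis
    qed
    have "H t holomorphic_on UNIV" using d holomorphic_on_def field_differentiable_def by blast
    moreover have "deriv (H t) z = deriv f (of_real t * z)" for z using d DERIV_imp_deriv by blast
    ultimately show ?thesis using elh_D[OF f] unfolding elh_def by auto
  qed
  have "continuous_map (top_of_set {0..1}) tau_CC H" by (rule path_CC[OF Hc])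
  moreover have "H ` topspace (top_of_set {0..1}) \<subseteq> elh" using Hel by auto
  ultimately have "pathin (subtopology tau_CC elh) H"
    unfolding pathin_def continuous_map_in_subtopology by blast
  then show ?thesis unfolding path_component_of_def by (intro exI[of _ H]) (simp add: H0 H1)
qed

lemma part1: "path_connected_space (subtopology tau_CC elh)"
  unfolding path_connected_space_iff_path_component topspace_subtopology topspace_CC
proof (intro ballI)
  fix f g assume "f \<in> UNIV \<inter> elh" "g \<in> UNIV \<inter> elh"
  then have "path_component_of (subtopology tau_CC elh) (\<lambda>z. z) f"
    "path_component_of (subtopology tau_CC elh) (\<lambda>z. z) g" using path_to_id by auto
  then show "path_component_of (subtopology tau_CC elh) f g"
    by (rule path_component_of_trans[OF path_component_of_sym])
qed




lemma elh_nonconst: assumes f: "f \<in> elh" shows "\<not> f constant_on UNIV"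
proof
  assume "f constant_on UNIV"
  then obtain c where "\<forall>x. f x = c" unfolding constant_on_def by blast
  then have "f = (\<lambda>x. c)" by (simp add: fun_eq_iff)
  then have "deriv f 0 = 0" by simp
  with elh_D(3)[OF f] show False by simp
qed

lemma P_omit: assumes f: "f \<in> elh" shows "\<exists>p. \<forall>w. w \<noteq> p \<longrightarrow> w \<in> range f"
proof (rule ccontr)
  assume "\<not> ?thesis"
  then have 0: "\<forall>p. \<exists>w. w \<noteq> p \<and> w \<notin> range f" by blast
  obtain a where a: "a \<notin> range f" using 0 by blast
  obtain b where b: "b \<noteq> a" "b \<notin> range f" using 0 by blast
  have "range f \<inter> {b,a} = {}" using a b by blast
  from little_Picard[OF elh_D(1)[OF f] b(1) this] obtain c where "f = (\<lambda>x. c)" .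
  then have "deriv f 0 = 0" by simp
  with elh_D(3)[OF f] show False by simp
qed

lemma open_img: assumes f: "f \<in> elh" shows "open (f ` ball 0 r)"
  by (rule open_mapping_thm[OF elh_D(1)[OF f] open_UNIV connected_UNIV open_ball subset_UNIV elh_nonconst[OF f]])

lemma sphere_cover:
  assumes f: "f \<in> elh" and p: "\<And>w. w \<noteq> p \<Longrightarrow> w \<in> range f" and R: "R > 0"
  shows "\<exists>N::nat. sphere p R \<subseteq> f ` cball 0 (real N)"
proof -
  have "sphere p R \<subseteq> (\<Union>n\<in>(UNIV::nat set). f ` ball 0 (real n))"
  proof
    fix w assume w: "w \<in> sphere p R"
    then have "w \<noteq> p" using R by auto
    then obtain z where z: "w = f z" using p by blast
    obtain n::nat where n: "norm z < real n" using reals_Archimedean2 by blast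
    then have "z \<in> ball 0 (real n)" by simp
    then show "w \<in> (\<Union>n\<in>(UNIV::nat set). f ` ball 0 (real n))" using z by blast
  qed
  then obtain C where C: "C \<subseteq> UNIV" "finite C" "sphere p R \<subseteq> (\<Union>n\<in>C. f ` ball 0 (real n))"
    using compactE_image[OF compact_sphere, of UNIV "\<lambda>n. f ` ball 0 (real n)"] open_img[OF f] by metis
  define N where "N = Max (insert 0 C)"
  have "sphere p R \<subseteq> f ` cball 0 (real N)"
  proof
    fix w assume "w \<in> sphere p R"
    then obtain n where n: "n \<in> C" "w \<in> f ` ball 0 (real n)" using C by blast
    then have "n \<le> N" using C(2) by (simp add: N_def)
    then have "ball 0 (real n) \<subseteq> cball 0 (real N)" by auto
    then show "w \<in> f ` cball 0 (real N)" using n(2) by blast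
  qed
  then show ?thesis by blast
qed

lemma small_inv:
  assumes e: "e > 0" and M: "c / e < real M" and n: "M \<le> n" and c: "c > 0"
  shows "c / (real n + 1) < e"
proof -
  have "c / e < real n + 1" using M n by linarith
  then have "c < e * (real n + 1)" using e by (simp add: field_simps)
  then show ?thesis by (simp add: field_simps)
qed

lemma inv_lim: "(\<lambda>m. 1 / (real m + 1)) \<longlonglongrightarrow> 0"
  using LIMSEQ_inverse_real_of_nat by (simp add: inverse_eq_divide add.commute)

lemma limit_factor:
  assumes f: "f \<in> elh" and h: "h \<in> elh" and gel: "\<And>n. g n \<in> elh"
    and ap: "\<And>n z. z \<in> cball 0 (real n) \<Longrightarrow> dist (g n (f z)) (h z) < 1 / (real n + 1)"
  shows "\<exists>G\<in>elh. h = G \<circ> f"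
proof -
  obtain p where p: "\<And>w. w \<noteq> p \<Longrightarrow> w \<in> range f" using P_omit[OF f] by blast
  have gh: "\<And>n. g n holomorphic_on UNIV" using elh_D(1)[OF gel] .
  have bnd: "\<exists>N::nat. \<forall>n m z. N \<le> n \<longrightarrow> N \<le> m \<longrightarrow> z \<in> cball p R \<longrightarrow>
      norm (g n z - g m z) \<le> 1/(real n+1) + 1/(real m+1)" if R: "R > 0" for R
  proof -
    obtain N::nat where N: "sphere p R \<subseteq> f ` cball 0 (real N)" using sphere_cover[OF f p R] by blast
    show ?thesis
    proof (intro exI[of _ N] allI impI)
      fix n m z assume nm: "N \<le> n" "N \<le> m" and z: "z \<in> cball p R"
      show "norm (g n z - g m z) \<le> 1/(real n+1) + 1/(real m+1)"
      proof (rule maximum_modulus_frontier[where S="cball p R" and f="\<lambda>z. g n z - g m z"])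
        show "(\<lambda>z. g n z - g m z) holomorphic_on interior (cball p R)"
          by (intro holomorphic_on_diff holomorphic_on_subset[OF gh] subset_UNIV)
        show "continuous_on (closure (cball p R)) (\<lambda>z. g n z - g m z)"
          by (intro holomorphic_on_imp_continuous_on holomorphic_on_diff holomorphic_on_subset[OF gh] subset_UNIV)
        show "bounded (cball p R)" by simp
        show "z \<in> cball p R" by fact
        fix w assume "w \<in> frontier (cball p R)"
        then have "w \<in> sphere p R" by simp
        then obtain u where u: "u \<in> cball 0 (real N)" "w = f u" using N by blast
        have "u \<in> cball 0 (real n)" "u \<in> cball 0 (real m)" using u(1) nm by auto
        then have d: "dist (g n (f u)) (h u) < 1/(real n+1)" "dist (g m (f u)) (h u) < 1/(real m+1)"
          using ap by blast+
        have "norm (g n w - g m w) \<le> norm (g n w - h u) + norm (g m w - h u)"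
          using norm_triangle_ineq4[of "g n w - h u" "g m w - h u"] by simp
        then show "norm (g n w - g m w) \<le> 1/(real n+1) + 1/(real m+1)"
          using d u(2) by (simp add: dist_norm)
      qed
    qed
  qed
  have conv: "convergent (\<lambda>n. g n z)" for z
  proof -
    define R where "R = norm (z - p) + 1"
    have R0: "R > 0" using norm_ge_zero[of "z-p"] unfolding R_def by linarith
    have R: "R > 0" "z \<in> cball p R" using R0 by (auto simp: R_def dist_norm norm_minus_commute)
    obtain N where N: "\<forall>n m z. N \<le> n \<longrightarrow> N \<le> m \<longrightarrow> z \<in> cball p R \<longrightarrow>
      norm (g n z - g m z) \<le> 1/(real n+1) + 1/(real m+1)" using bnd[OF R(1)] by blast
    have "Cauchy (\<lambda>n. g n z)"
    proof (rule CauchyI)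
      fix e::real assume e: "0 < e"
      obtain M::nat where M: "2 / e < real M" using reals_Archimedean2 by blast
      show "\<exists>M. \<forall>m\<ge>M. \<forall>n\<ge>M. norm (g m z - g n z) < e"
      proof (intro exI[of _ "max N M"] allI impI)
        fix m n assume mn: "max N M \<le> m" "max N M \<le> n"
        then have "norm (g m z - g n z) \<le> 1/(real m+1) + 1/(real n+1)" using N R(2) by simp
        also have "\<dots> < e/2 + e/2"
        proof -
          have a: "1/(real m+1) < e/2" by (rule small_inv[of _ 1 M]) (use e M mn in auto)
          have b: "1/(real n+1) < e/2" by (rule small_inv[of _ 1 M]) (use e M mn in auto)
          show ?thesis using a b by linarith
        qed
        finally show "norm (g m z - g n z) < e" by simp
      qed
    qed
    then show ?thesis using Cauchy_convergent_iff by blast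
  qed
  define G where "G z = lim (\<lambda>n. g n z)" for z
  have gG: "(\<lambda>n. g n z) \<longlonglongrightarrow> G z" for z using conv[of z] convergent_LIMSEQ_iff G_def by metis
  have ubnd: "\<exists>N::nat. \<forall>n z. N \<le> n \<longrightarrow> z \<in> cball p R \<longrightarrow> norm (g n z - G z) \<le> 1/(real n+1)"
    if R: "R > 0" for R
  proof -
    obtain N where N: "\<forall>n m z. N \<le> n \<longrightarrow> N \<le> m \<longrightarrow> z \<in> cball p R \<longrightarrow>
      norm (g n z - g m z) \<le> 1/(real n+1) + 1/(real m+1)" using bnd[OF R] by blast
    show ?thesis
    proof (intro exI[of _ N] allI impI)
      fix n z assume n: "N \<le> n" and z: "z \<in> cball p R"
      have lim1: "(\<lambda>m. norm (g n z - g m z)) \<longlonglongrightarrow> norm (g n z - G z)"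
        by (intro tendsto_intros gG)
      have lim2: "(\<lambda>m. 1/(real n+1) + 1/(real m+1)) \<longlonglongrightarrow> 1/(real n+1) + 0"
        by (intro tendsto_intros inv_lim)
      have "\<forall>m\<ge>N. norm (g n z - g m z) \<le> 1/(real n+1) + 1/(real m+1)" using N n z by blast
      then have "norm (g n z - G z) \<le> 1/(real n+1) + 0" using LIMSEQ_le[OF lim1 lim2] by blast
      then show "norm (g n z - G z) \<le> 1/(real n+1)" by simp
    qed
  qed
  have ulim: "uniform_limit (cball p R) g G sequentially" if R: "R > 0" for R
  proof -
    obtain N where N: "\<forall>n z. N \<le> n \<longrightarrow> z \<in> cball p R \<longrightarrow> norm (g n z - G z) \<le> 1/(real n+1)"
      using ubnd[OF R] by blast
    show ?thesis unfolding uniform_limit_iff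
    proof (intro allI impI)
      fix e::real assume e: "e > 0"
      obtain M::nat where M: "1 / e < real M" using reals_Archimedean2 by blast
      have "\<forall>n\<ge>max N M. \<forall>x\<in>cball p R. dist (g n x) (G x) < e"
      proof (intro allI impI ballI)
        fix n x assume n: "max N M \<le> n" and x: "x \<in> cball p R"
        have "norm (g n x - G x) \<le> 1/(real n+1)" using N n x by simp
        also have "\<dots> < e" using small_inv[of e 1 M n] e M n by simp
        finally show "dist (g n x) (G x) < e" by (simp add: dist_norm)
      qed
      then show "\<forall>\<^sub>F n in sequentially. \<forall>x\<in>cball p R. dist (g n x) (G x) < e"
        unfolding eventually_sequentially by blast
    qed
  qed
  have ev_hol: "\<forall>\<^sub>F n in sequentially. continuous_on (cball p R) (g n) \<and> g n holomorphic_on ball p R" for R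
    by (intro always_eventually allI conjI holomorphic_on_imp_continuous_on holomorphic_on_subset[OF gh] subset_UNIV)
  have Gball: "G holomorphic_on ball p R" if "R > 0" for R
    using holomorphic_uniform_limit[OF ev_hol ulim[OF that] trivial_limit_sequentially] by blast
  have Gh: "G holomorphic_on UNIV"
    unfolding holomorphic_on_def
  proof
    fix z :: complex
    define R where "R = norm (z - p) + 1"
    have R0: "R > 0" using norm_ge_zero[of "z-p"] unfolding R_def by linarith
    have R: "R > 0" "z \<in> ball p R" using R0 by (auto simp: R_def dist_norm norm_minus_commute)
    have "G field_differentiable at z"
      using holomorphic_on_imp_differentiable_at[OF Gball[OF R(1)] open_ball R(2)] .
    then show "G field_differentiable at z within UNIV" by simp
  qed
  have Gf: "h = G \<circ> f"
  proof
    fix z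
    have ev: "\<forall>\<^sub>F n in sequentially. norm (g n (f z) - h z) \<le> 1 / (real n + 1)"
    proof -
      obtain N::nat where N: "norm z < real N" using reals_Archimedean2 by blast
      have "\<forall>n\<ge>N. norm (g n (f z) - h z) \<le> 1 / (real n + 1)"
      proof (intro allI impI)
        fix n assume "N \<le> n"
        then have "z \<in> cball 0 (real n)" using N by simp
        then show "norm (g n (f z) - h z) \<le> 1 / (real n + 1)" using ap[of z n] by (simp add: dist_norm)
      qed
      then show ?thesis unfolding eventually_sequentially by blast
    qed
    have "(\<lambda>n. g n (f z) - h z) \<longlonglongrightarrow> 0" by (rule Lim_null_comparison[OF ev inv_lim])
    then have "(\<lambda>n. g n (f z)) \<longlonglongrightarrow> h z" using Lim_null by blast
    then show "h z = (G \<circ> f) z" using LIMSEQ_unique gG[of "f z"] by simp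
  qed
  have dG0: "deriv G 0 = 1"
  proof -
    define R where "R = norm p + 1"
    have R0: "R > 0" using norm_ge_zero[of p] unfolding R_def by linarith
    have R: "R > 0" "0 \<in> ball p R" using R0 by (auto simp: R_def)
    have "(\<lambda>n. deriv (g n) 0) \<longlonglongrightarrow> deriv G 0"
      by (rule deriv_complex_uniform_limit[OF uniform_limit_on_subset[OF ulim[OF R(1)] ball_subset_cball]
          _ _ open_ball R(2)])
        (simp_all add: holomorphic_on_subset[OF gh subset_UNIV])
    moreover have "(\<lambda>n. deriv (g n) 0) = (\<lambda>n. 1)" using elh_D(3)[OF gel] by simp
    ultimately have "(\<lambda>n. 1::complex) \<longlonglongrightarrow> deriv G 0" by simp
    then show ?thesis using LIMSEQ_unique[OF _ tendsto_const] by metis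
  qed
  have dGr: "deriv G (f z) \<noteq> 0" for z
  proof -
    have dG: "(G has_field_derivative deriv G (f z)) (at (f z))"
      by (rule holomorphic_derivI[OF Gh open_UNIV UNIV_I])
    have "((G \<circ> f) has_field_derivative deriv G (f z) * deriv f z) (at z)"
      by (rule DERIV_chain[OF dG elh_D(4)[OF f]])
    then have "(h has_field_derivative deriv G (f z) * deriv f z) (at z)" using Gf by simp
    then have "deriv h z = deriv G (f z) * deriv f z" by (rule DERIV_imp_deriv)
    then show ?thesis using elh_D(2)[OF h, of z] by auto
  qed
  have dul: "uniform_limit K (\<lambda>n. deriv (g n)) (deriv G) sequentially" if K: "compact K" for K
  proof -
    obtain r x where r: "K \<subseteq> cball x r" "0 \<le> r" using compact_imp_bounded[OF K] bounded_subset_cball by metis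
    define R where "R = r + dist p x + 1"
    have KR: "K \<subseteq> cball p R"
    proof
      fix w assume "w \<in> K"
      then have "dist x w \<le> r" using r by auto
      then show "w \<in> cball p R" using dist_triangle[of p w x] by (simp add: R_def)
    qed
    have R: "R > 0" using r(2) zero_le_dist[of p x] unfolding R_def by linarith
    obtain N where N: "\<forall>n z. N \<le> n \<longrightarrow> z \<in> cball p (R+1) \<longrightarrow> norm (g n z - G z) \<le> 1/(real n+1)"
      using ubnd[of "R+1"] R by auto
    have dbnd: "norm (deriv (g n) z - deriv G z) \<le> 2 / (real n + 1)"
      if n: "N \<le> n" and z: "z \<in> cball p R" for n z
    proof -
      have sub: "ball z 1 \<subseteq> cball p (R+1)"
      proof
        fix w assume "w \<in> ball z 1"
        then have "dist z w < 1" by simp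
        then show "w \<in> cball p (R+1)" using z dist_triangle[of p w z] by simp
      qed
      have "cmod ((deriv ^^ 1) (\<lambda>w. g n w - G w) z) \<le> fact 1 * (2 / (real n + 1)) / 1 ^ 1"
      proof (rule Cauchy_higher_deriv_bound[where y=0])
        show "(\<lambda>w. g n w - G w) holomorphic_on ball z 1"
          by (intro holomorphic_on_diff holomorphic_on_subset[OF gh] holomorphic_on_subset[OF Gh] subset_UNIV)
        show "continuous_on (cball z 1) (\<lambda>w. g n w - G w)"
          by (intro holomorphic_on_imp_continuous_on holomorphic_on_diff holomorphic_on_subset[OF gh]
              holomorphic_on_subset[OF Gh] subset_UNIV)
        fix w assume "w \<in> ball z 1"
        then have "norm (g n w - G w) \<le> 1/(real n+1)" using N n sub by blast
        also have "\<dots> < 2 / (real n + 1)" by (simp add: divide_strict_right_mono)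
        finally show "g n w - G w \<in> ball 0 (2 / (real n + 1))" by simp
      qed auto
      moreover have "deriv (\<lambda>w. g n w - G w) z = deriv (g n) z - deriv G z"
        by (rule deriv_diff) (auto intro: holomorphic_on_imp_differentiable_at[OF gh] holomorphic_on_imp_differentiable_at[OF Gh])
      ultimately show ?thesis by simp
    qed
    have "uniform_limit (cball p R) (\<lambda>n. deriv (g n)) (deriv G) sequentially"
      unfolding uniform_limit_iff
    proof (intro allI impI)
      fix e::real assume e: "e > 0"
      obtain M::nat where M: "2 / e < real M" using reals_Archimedean2 by blast
      have "\<forall>n\<ge>max N M. \<forall>x\<in>cball p R. dist (deriv (g n) x) (deriv G x) < e"
      proof (intro allI impI ballI)
        fix n x assume n: "max N M \<le> n" and x: "x \<in> cball p R"
        have "norm (deriv (g n) x - deriv G x) \<le> 2/(real n+1)" using dbnd n x by simp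
        also have "\<dots> < e" using small_inv[of e 2 M n] e M n by simp
        finally show "dist (deriv (g n) x) (deriv G x) < e" by (simp add: dist_norm)
      qed
      then show "\<forall>\<^sub>F n in sequentially. \<forall>x\<in>cball p R. dist (deriv (g n) x) (deriv G x) < e"
        unfolding eventually_sequentially by blast
    qed
    then show ?thesis using uniform_limit_on_subset KR by blast
  qed
  have dGp: "deriv G p \<noteq> 0"
  proof (cases "deriv G constant_on UNIV")
    case True
    then obtain c where "\<forall>x. deriv G x = c" unfolding constant_on_def by blast
    then have "deriv G p = deriv G 0" by simp
    then show ?thesis using dG0 by simp
  next
    case False
    show ?thesis
    proof (rule Hurwitz_no_zeros[of UNIV "\<lambda>n. deriv (g n)" "deriv G"])
      show "\<And>n. deriv (g n) holomorphic_on UNIV" by (rule holomorphic_deriv[OF gh open_UNIV])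
      show "deriv G holomorphic_on UNIV" by (rule holomorphic_deriv[OF Gh open_UNIV])
      show "\<And>K. compact K \<Longrightarrow> K \<subseteq> UNIV \<Longrightarrow> uniform_limit K (\<lambda>n. deriv (g n)) (deriv G) sequentially"
        using dul by blast
      show "\<not> deriv G constant_on UNIV" by fact
      show "\<And>n z. z \<in> UNIV \<Longrightarrow> deriv (g n) z \<noteq> 0" using elh_D(2)[OF gel] by blast
    qed auto
  qed
  have "G \<in> elh"
    unfolding elh_def
  proof (intro CollectI conjI allI)
    show "G holomorphic_on UNIV" by fact
    show "deriv G 0 = 1" by fact
    fix w show "deriv G w \<noteq> 0"
    proof (cases "w = p")
      case True then show ?thesis using dGp by simp
    next
      case False
      then obtain z where "w = f z" using p by blast
      then show ?thesis using dGr by simp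
    qed
  qed
  then show ?thesis using Gf by blast
qed

lemma part2:
  assumes f: "f \<in> elh"
  shows "closedin (subtopology tau_CC elh) (R_elh f \<inter> elh)"
proof -
  define A where "A = R_elh f \<inter> elh"
  define U where "U = {g. \<exists>K e. compact K \<and> e > 0 \<and> (\<forall>\<phi>\<in>A. \<exists>z\<in>K. e \<le> dist (\<phi> z) (g z))}"
  have Uo: "openin tau_CC U"
    unfolding openin_CC
  proof
    fix g assume "g \<in> U"
    then have "\<exists>K e. compact K \<and> e > 0 \<and> (\<forall>\<phi>\<in>A. \<exists>z\<in>K. e \<le> dist (\<phi> z) (g z))"
      unfolding U_def by simp
    then obtain K e where K: "compact K" "e > 0" "\<forall>\<phi>\<in>A. \<exists>z\<in>K. e \<le> dist (\<phi> z) (g z)"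
      by blast
    have sub: "{g'. \<forall>z\<in>K. dist (g' z) (g z) < e/2} \<subseteq> U"
    proof
      fix g' assume "g' \<in> {g'. \<forall>z\<in>K. dist (g' z) (g z) < e/2}"
      then have g': "\<forall>z\<in>K. dist (g' z) (g z) < e/2" by simp
      have "\<forall>\<phi>\<in>A. \<exists>z\<in>K. e/2 \<le> dist (\<phi> z) (g' z)"
      proof
        fix \<phi> assume "\<phi> \<in> A"
        then obtain z where z: "z \<in> K" "e \<le> dist (\<phi> z) (g z)" using K(3) by blast
        have t: "dist (\<phi> z) (g z) \<le> dist (\<phi> z) (g' z) + dist (g' z) (g z)" by (rule dist_triangle)
        have "dist (g' z) (g z) < e/2" using g' z(1) by blast
        then have "e/2 \<le> dist (\<phi> z) (g' z)" using z(2) t by linarith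
        then show "\<exists>z\<in>K. e/2 \<le> dist (\<phi> z) (g' z)" using z(1) by blast
      qed
      moreover have "e/2 > 0" using K(2) by simp
      ultimately have "\<exists>K e. compact K \<and> e > 0 \<and> (\<forall>\<phi>\<in>A. \<exists>z\<in>K. e \<le> dist (\<phi> z) (g' z))"
        using K(1) by blast
      then show "g' \<in> U" unfolding U_def by simp
    qed
    have "e/2 > 0" using K(2) by simp
    then show "\<exists>K e. compact K \<and> e > 0 \<and> {g'. \<forall>z\<in>K. dist (g' z) (g z) < e} \<subseteq> U"
      using K(1) sub by (intro exI[of _ K] exI[of _ "e/2"] conjI)
  qed
  have ts: "topspace (subtopology tau_CC elh) = elh" by (simp add: topspace_CC)
  have eq: "elh - A = U \<inter> elh"
  proof
    show "elh - A \<subseteq> U \<inter> elh"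
    proof
      fix h assume hA: "h \<in> elh - A"
      then have h: "h \<in> elh" "h \<notin> A" by auto
      show "h \<in> U \<inter> elh"
      proof (rule ccontr)
        assume "h \<notin> U \<inter> elh"
        then have nU: "h \<notin> U" using h by blast
        have "\<forall>n::nat. \<exists>g. g \<in> elh \<and> (\<forall>z\<in>cball 0 (real n). dist (g (f z)) (h z) < 1/(real n+1))"
        proof
          fix n::nat
          have "\<not> (\<forall>\<phi>\<in>A. \<exists>z\<in>cball 0 (real n). 1/(real n+1) \<le> dist (\<phi> z) (h z))"
          proof
            assume a: "\<forall>\<phi>\<in>A. \<exists>z\<in>cball 0 (real n). 1/(real n+1) \<le> dist (\<phi> z) (h z)"
            have "(1::real)/(real n+1) > 0" by simp
            then have "\<exists>K e. compact K \<and> e > 0 \<and> (\<forall>\<phi>\<in>A. \<exists>z\<in>K. e \<le> dist (\<phi> z) (h z))"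
              using a compact_cball[of 0 "real n"] by blast
            then have "h \<in> U" unfolding U_def by simp
            with nU show False by contradiction
          qed
          then obtain \<phi> where \<phi>: "\<phi> \<in> A" "\<forall>z\<in>cball 0 (real n). dist (\<phi> z) (h z) < 1/(real n+1)"
            by (auto simp: not_le)
          then obtain g where g: "g \<in> elh" "\<phi> = g \<circ> f" unfolding A_def R_elh_def by blast
          then show "\<exists>g. g \<in> elh \<and> (\<forall>z\<in>cball 0 (real n). dist (g (f z)) (h z) < 1/(real n+1))"
            using \<phi>(2) by auto
        qed
        then obtain g where g: "\<And>n. g n \<in> elh"
          "\<And>n z. z \<in> cball 0 (real n) \<Longrightarrow> dist (g n (f z)) (h z) < 1/(real n+1)" by metis
        from limit_factor[OF f h(1) g] obtain G where "G \<in> elh" "h = G \<circ> f" by blast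
        then have "h \<in> A" using h(1) unfolding A_def R_elh_def by blast
        with h(2) show False by contradiction
      qed
    qed
    show "U \<inter> elh \<subseteq> elh - A"
    proof
      fix h assume hU: "h \<in> U \<inter> elh"
      then have "\<exists>K e. compact K \<and> e > 0 \<and> (\<forall>\<phi>\<in>A. \<exists>z\<in>K. e \<le> dist (\<phi> z) (h z))"
        unfolding U_def by simp
      then obtain K e where K: "e > 0" "\<forall>\<phi>\<in>A. \<exists>z\<in>K. e \<le> dist (\<phi> z) (h z)" by blast
      have "h \<notin> A"
      proof
        assume "h \<in> A"
        then obtain z where "e \<le> dist (h z) (h z)" using K(2) by blast
        then show False using K(1) by simp
      qed
      then show "h \<in> elh - A" using hU by blast
    qed
  qed
  have "openin (subtopology tau_CC elh) (elh - A)"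
    unfolding openin_subtopology eq using Uo by blast
  moreover have "A \<subseteq> elh" unfolding A_def by blast
  ultimately have "closedin (subtopology tau_CC elh) A"
    unfolding closedin_def ts by blast
  then show ?thesis unfolding A_def .
qed

theorem proposition3p16:
  shows "path_connected_space (subtopology tau_CC elh) \<and>
    (\<forall>f\<in>elh. closedin (subtopology tau_CC elh) (R_elh f \<inter> elh))"
  using part1 part2 by blast


end
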